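(* Every complex Hilbert space $H$ of finite dimension $n\ge2$ admits a bounded linear operator $T$ and a nontrivial subspace $\mathcal{M}$ of $H$ such that $T$ is $\mathcal{M}$-diskcyclic.
   Context: $\mathbb{D}=\{\alpha\in\mathbb{C}:|\alpha|\le1\}$. A subspace is nontrivial if it is neither $\{0\}$ nor the whole space. $T$ is $\mathcal{M}$-diskcyclic if there is $x\in H$ with $\{\alpha T^mx:\alpha\in\mathbb{D},m=0,1,2,\dots\}\cap\mathcal{M}$ dense in $\mathcal{M}$. *)

theory Defs
  imports "HOL-Analysis.Analysis"
begin

text \<open>The closed unit disk in the complex plane.\<close>
definition unit_disk :: "complex set" where
  "unit_disk = {\<alpha>. cmod \<alpha> \<le> 1}"

text \<open>T is M-diskcyclic: some x has disk orbit whose intersection with M is dense in M.\<close>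
definition M_diskcyclic ::
  "(complex ^ 'n \<Rightarrow> complex ^ 'n) \<Rightarrow> (complex ^ 'n) set \<Rightarrow> bool" where
  "M_diskcyclic T M \<longleftrightarrow> (\<exists>x. M \<subseteq> closure ({\<alpha> *s (T ^^ m) x | \<alpha> m. \<alpha> \<in> unit_disk} \<inter> M))"

end

theory Submission
  imports Defs
begin

lemma Tpow: "(((*s) (2::complex)) ^^ m) (v::complex^'n) = ((2::complex)^m) *s v"
  by (induction m) (auto simp: vector_smult_assoc)

theorem mainTheorem10:
  assumes "CARD('n::finite) \<ge> 2"
  shows "\<exists>(T :: complex ^ 'n \<Rightarrow> complex ^ 'n) (M :: (complex ^ 'n) set).
           Vector_Spaces.linear (*s) (*s) T \<and> bounded_linear T \<and>
           vec.subspace M \<and> M \<noteq> {0} \<and> M \<noteq> UNIV \<and>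
           M_diskcyclic T M"
proof -
  obtain i j :: 'n where ij: "i \<noteq> j"
  proof -
    have "\<not> (\<forall>i j::'n. i = j)"
    proof
      assume "\<forall>i j::'n. i = j"
      hence "card (UNIV::'n set) \<le> 1" by (simp add: card_le_Suc0_iff_eq)
      with assms show False by simp
    qed
    thus ?thesis using that by blast
  qed
  define e :: "complex^'n" where "e = axis i 1"
  define T :: "complex ^ 'n \<Rightarrow> complex ^ 'n" where "T = (*s) 2"
  define M where "M = range (\<lambda>k::complex. k *s e)"
  have lin: "Vector_Spaces.linear (*s) (*s) T"
    unfolding T_def by (rule vec.linear_scale_self)
  have "T = scaleR 2"
    unfolding T_def by (auto simp: vec_eq_iff scaleR_conv_of_real)
  hence bl: "bounded_linear T" by (simp add: bounded_linear_scaleR_right)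
  have sub: "vec.subspace M" unfolding M_def
    using vec.subspace_span[of "{e}"] by (simp add: vec.span_singleton)
  have e0: "e \<noteq> 0" unfolding e_def by (simp add: axis_eq_0_iff)
  have "e \<in> M" unfolding M_def by (auto intro!: image_eqI[where x=1])
  hence M0: "M \<noteq> {0}" using e0 by auto
  have "axis j 1 \<notin> M"
  proof
    assume "axis j (1::complex) \<in> M"
    then obtain k where "axis j 1 = k *s e" unfolding M_def by auto
    hence "(axis j (1::complex)) $ j = (k *s e) $ j" by simp
    thus False using ij unfolding e_def by (simp add: axis_def)
  qed
  hence MU: "M \<noteq> UNIV" by auto
  have "M \<subseteq> {\<alpha> *s (T ^^ m) e | \<alpha> m. \<alpha> \<in> unit_disk} \<inter> M"
  proof
    fix v assume v: "v \<in> M"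
    then obtain c where c: "v = c *s e" unfolding M_def by auto
    obtain m where m: "cmod c < 2 ^ m" using real_arch_pow[of 2 "cmod c"] by auto
    have "v = (c / 2^m) *s (T ^^ m) e"
      unfolding T_def Tpow c by (simp add: vector_smult_assoc)
    moreover have "c / 2^m \<in> unit_disk" using m
      by (simp add: unit_disk_def norm_divide norm_power)
    ultimately show "v \<in> {\<alpha> *s (T ^^ m) e | \<alpha> m. \<alpha> \<in> unit_disk} \<inter> M"
      using v by blast
  qed
  hence "M_diskcyclic T M" unfolding M_diskcyclic_def using closure_subset by blast
  thus ?thesis using lin bl sub M0 MU by blast
qed

end
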